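(* Let $n\in\mathbb{N}$ and $0<s_1,\dots,s_n<1$ pairwise distinct. Then $$\mathcal{E}_\mu(s_1^z,\dots,s_n^z)\cap\prod_{j=1}^n s_j^{-1/2}\mathbb{T}\subseteq\overline{\{(s_1^{-\frac12+iy},\dots,s_n^{-\frac12+iy}):y\in\mathbb{R}\}}.$$
   Context: $\mu$ is the measure on $\Omega=\{\mathrm{Re}\,z\ge-\tfrac12\}$ given by $d\mu=\sum_{n=-1}^\infty \frac{|\Gamma(\frac n2+iy+1)|^2}{2\pi(n+1)!}\,dy\,d\delta_{n/2}(x)$; $s^z=e^{z\ln s}$; $\mathbb{T}$ the unit circle. The joint essential range $\mathcal{E}_\mu(\varphi_1,\dots,\varphi_n)$ of $\varphi_j\in L^\infty(\mu)$ is the set of $\lambda\in\mathbb{C}^n$ such that for every $\varepsilon>0$, $\mu(\{z:\sum_j|\varphi_j(z)-\lambda_j|<\varepsilon\})>0$. *)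

theory Defs
  imports "HOL-Analysis.Analysis"
begin

definition rpowc :: "real \<Rightarrow> complex \<Rightarrow> complex" where
  "rpowc s z = exp (z * complex_of_real (ln s))"

text \<open>Density of mu on the vertical line Re z = n/2, indexed by m = n + 1 \<in> \<nat>
  (so n ranges over -1, 0, 1, ...):  |Gamma(n/2 + iy + 1)|^2 / (2 pi (n+1)!).\<close>
definition mu_weight :: "nat \<Rightarrow> real \<Rightarrow> real" where
  "mu_weight m y = (cmod (Gamma (Complex ((real m - 1) / 2 + 1) y)))\<^sup>2 / (2 * pi * fact m)"

definition mu_emeasure :: "complex set \<Rightarrow> ennreal" where
  "mu_emeasure A = (\<Sum>m. \<integral>\<^sup>+ y. ennreal (mu_weight m y) *
                        indicator A (Complex ((real m - 1) / 2) y) \<partial>lborel)"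

definition joint_ess_range_mu :: "('n::finite \<Rightarrow> complex \<Rightarrow> complex) \<Rightarrow> (complex ^ 'n) set" where
  "joint_ess_range_mu \<phi> = {c. \<forall>\<epsilon>>0. mu_emeasure {z. (\<Sum>j\<in>UNIV. cmod (\<phi> j z - c $ j)) < \<epsilon>} > 0}"

end

theory Submission
  imports Defs
begin

lemma cnorm_le_l1: "norm (x :: complex ^ 'n) \<le> (\<Sum>i\<in>UNIV. cmod (x $ i))"
  by (simp add: norm_vec_def L2_set_le_sum)

lemma mu_pos_imp_line:
  assumes "mu_emeasure A > 0" and "\<And>z. z \<in> A \<Longrightarrow> Re z < 0"
  shows "\<exists>y. Complex (-1/2) y \<in> A"
proof (rule ccontr)
  assume na: "\<not> ?thesis"
  have "\<And>m y. indicator A (Complex ((real m - 1) / 2) y) = (0::ennreal)"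
  proof -
    fix m :: nat and y
    show "indicator A (Complex ((real m - 1) / 2) y) = (0::ennreal)"
    proof (cases m)
      case 0 then show ?thesis using na by (simp add: indicator_def)
    next
      case (Suc k)
      then have "Re (Complex ((real m - 1) / 2) y) \<ge> 0" by simp
      then show ?thesis using assms(2) by (force simp: indicator_def)
    qed
  qed
  then have "mu_emeasure A = 0" unfolding mu_emeasure_def by simp
  then show False using assms(1) by simp
qed

lemma norm_rpowc: "cmod (rpowc s z) = exp (Re z * ln s)"
  by (simp add: rpowc_def)

theorem mainTheorem9:
  fixes s :: "real ^ 'n"
  assumes "\<forall>j. 0 < s $ j \<and> s $ j < 1"
    and "inj (\<lambda>j. s $ j)"
  shows "joint_ess_range_mu (\<lambda>j z. rpowc (s $ j) z)
           \<inter> {c. \<forall>j. cmod (c $ j) = s $ j powr (-1/2)}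
         \<subseteq> closure (range (\<lambda>y::real. \<chi> j. rpowc (s $ j) (Complex (-1/2) y)))"
proof
  fix c assume c: "c \<in> joint_ess_range_mu (\<lambda>j z. rpowc (s $ j) z)
           \<inter> {c. \<forall>j. cmod (c $ j) = s $ j powr (-1/2)}"
  obtain j0 :: 'n where True by simp
  define d where "d = s $ j0 powr (-1/2) - 1"
  have s0: "0 < s $ j0" "s $ j0 < 1" using assms(1) by auto
  have lns: "ln (s $ j0) < 0" using s0 by simp
  have "s $ j0 powr (-1/2) = exp (-1/2 * ln (s $ j0))" using s0 by (simp add: powr_def)
  moreover have "exp (-1/2 * ln (s $ j0)) > 1" using lns by simp
  ultimately have dpos: "d > 0" unfolding d_def by simp
  show "c \<in> closure (range (\<lambda>y::real. \<chi> j. rpowc (s $ j) (Complex (-1/2) y)))"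
    unfolding closure_approachable
  proof (intro allI impI)
    fix e :: real assume e: "e > 0"
    define e' where "e' = min e d"
    have e'pos: "e' > 0" using e dpos by (simp add: e'_def)
    let ?A = "{z. (\<Sum>j\<in>UNIV. cmod (rpowc (s $ j) z - c $ j)) < e'}"
    have pos: "mu_emeasure ?A > 0" using c e'pos by (simp add: joint_ess_range_mu_def)
    have neg: "Re z < 0" if z: "z \<in> ?A" for z
    proof (rule ccontr)
      assume "\<not> Re z < 0"
      then have "Re z \<ge> 0" by simp
      then have "Re z * ln (s $ j0) \<le> 0" using lns by (simp add: mult_nonneg_nonpos)
      then have "cmod (rpowc (s $ j0) z) \<le> 1" by (simp add: norm_rpowc)
      moreover have "cmod (c $ j0) = d + 1" using c by (simp add: d_def)
      ultimately have "cmod (rpowc (s $ j0) z - c $ j0) \<ge> d"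
        using norm_triangle_ineq3[of "c $ j0" "rpowc (s $ j0) z"] by (simp add: norm_minus_commute)
      moreover have "cmod (rpowc (s $ j0) z - c $ j0) \<le> (\<Sum>j\<in>UNIV. cmod (rpowc (s $ j) z - c $ j))"
        by (rule member_le_sum) auto
      ultimately show False using z by (simp add: e'_def)
    qed
    obtain y where y: "Complex (-1/2) y \<in> ?A" using mu_pos_imp_line[OF pos neg] by blast
    let ?v = "(\<chi> j. rpowc (s $ j) (Complex (-1/2) y))"
    have "dist ?v c \<le> (\<Sum>j\<in>UNIV. cmod (rpowc (s $ j) (Complex (-1/2) y) - c $ j))"
      using cnorm_le_l1[of "?v - c"] by (simp add: dist_norm)
    also have "\<dots> < e" using y by (simp add: e'_def)
    finally show "\<exists>x\<in>range (\<lambda>y::real. \<chi> j. rpowc (s $ j) (Complex (-1/2) y)). dist x c < e"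
      by blast
  qed
qed

end
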